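(* Fix $0<\alpha<1/2$. Consider the random binary tree generated by the following process: start from a single root node of depth $0$; each node $\Omega$ of depth $d(\Omega)$ is split into two children independently with probability $p_{split}(\Omega)=\alpha^{d(\Omega)}$, and otherwise becomes a leaf. Let $K$ be the number of leaves of the resulting tree. Then there exist constants $C>0$ and $C_K>0$ such that for all integers $k\ge 2$, $$\mathbb{P}(K>k)\le C\, e^{-C_K\, k\log k}.$$
   Context: $K=(X+1)/2$, where $X$ is the total number of nodes of the tree. *)

theory Defs
  imports "HOL-Probability.Probability"
begin

text \<open>The state after processing depths 0..n-1 is a pair (z, l): z = number of nodes at
  depth n (not yet processed), l = number of leaves found at depths < n.
  Each of the z nodes at depth d splits independently with probability alpha^d,
  so the number s of splitting nodes is Binomial(z, alpha^d); they produce 2s nodes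
  at depth d+1, and the other z - s nodes become leaves.\<close>

fun tree_gen :: "real \<Rightarrow> nat \<Rightarrow> (nat \<times> nat) pmf" where
  "tree_gen \<alpha> 0 = return_pmf (1, 0)"
| "tree_gen \<alpha> (Suc d) =
     bind_pmf (tree_gen \<alpha> d)
       (\<lambda>(z, l). map_pmf (\<lambda>s. (2 * s, l + (z - s))) (binomial_pmf z (\<alpha> ^ d)))"

text \<open>P(K > k): the number of leaves found up to depth n is nondecreasing in n and
  equals K once the tree is exhausted, so the event {K > k} is the increasing union
  of the events {leaves up to depth n > k} (up to the null event of an infinite tree).\<close>

definition leaf_tail :: "real \<Rightarrow> nat \<Rightarrow> real" where
  "leaf_tail \<alpha> k = (SUP n. measure_pmf.prob (tree_gen \<alpha> n) {(z, l). l > k})"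

end

theory Submission
  imports Defs
begin

lemma binom_gf:
  fixes x H p :: real and z l :: nat
  assumes p: "0 \<le> p" "p \<le> 1" and x: "0 \<le> x" and H: "0 \<le> H"
  shows "(\<integral>\<^sup>+s. ennreal (x ^ (l + (z - s)) * H ^ (2 * s)) \<partial>binomial_pmf z p)
       = ennreal (x ^ l * (p * H^2 + (1 - p) * x) ^ z)"
proof -
  have sub: "set_pmf (binomial_pmf z p) \<subseteq> {..z}"
    using p by (auto simp: set_pmf_binomial_eq split: if_splits)
  have "(\<integral>\<^sup>+s. ennreal (x ^ (l + (z - s)) * H ^ (2 * s)) \<partial>binomial_pmf z p)
      = (\<Sum>s\<in>{..z}. ennreal (x ^ (l + (z - s)) * H ^ (2 * s)) * pmf (binomial_pmf z p) s)"
    using sub by (intro nn_integral_measure_pmf_support) auto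
  also have "\<dots> = (\<Sum>s\<in>{..z}. ennreal (x ^ (l + (z - s)) * H ^ (2 * s) * ((z choose s) * p^s * (1-p)^(z-s))))"
    using p x H by (intro sum.cong refl) (simp add: ennreal_mult)
  also have "\<dots> = ennreal (\<Sum>s\<in>{..z}. x ^ (l + (z - s)) * H ^ (2 * s) * ((z choose s) * p^s * (1-p)^(z-s)))"
    using p x H by (intro sum_ennreal) auto
  also have "(\<Sum>s\<in>{..z}. x ^ (l + (z - s)) * H ^ (2 * s) * ((z choose s) * p^s * (1-p)^(z-s)))
       = x ^ l * (\<Sum>s\<le>z. of_nat (z choose s) * (p * H^2) ^ s * ((1 - p) * x) ^ (z - s))"
    unfolding sum_distrib_left
  proof (intro sum.cong refl)
    fix s assume "s \<in> {..z}"
    hence e: "l + (z - s) = l + (z - s)" by simp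
    show "x ^ (l + (z - s)) * H ^ (2 * s) * ((z choose s) * p^s * (1-p)^(z-s))
        = x ^ l * (of_nat (z choose s) * (p * H^2) ^ s * ((1 - p) * x) ^ (z - s))"
      by (simp add: power_add power_mult power_mult_distrib mult_ac power2_eq_square)
  qed
  also have "\<dots> = x ^ l * (p * H^2 + (1 - p) * x) ^ z"
    by (simp add: binomial_ring)
  finally show ?thesis .
qed

lemma super:
  fixes \<alpha> x :: real and h :: "nat \<Rightarrow> real"
  assumes a: "0 < \<alpha>" "\<alpha> \<le> 1" and x: "1 \<le> x" and h1: "\<And>d. 1 \<le> h d"
    and hs: "\<And>d. \<alpha>^d * h (Suc d)^2 + (1 - \<alpha>^d) * x \<le> h d"
  shows "(\<integral>\<^sup>+zl. ennreal (x ^ snd zl * h n ^ fst zl) \<partial>tree_gen \<alpha> n) \<le> ennreal (h 0)"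
proof (induction n)
  case 0
  then show ?case by simp
next
  case (Suc n)
  have p: "0 \<le> \<alpha>^n" "\<alpha>^n \<le> 1" using a by (auto simp: power_le_one)
  have "(\<integral>\<^sup>+zl. ennreal (x ^ snd zl * h (Suc n) ^ fst zl) \<partial>tree_gen \<alpha> (Suc n))
      = (\<integral>\<^sup>+zl. (\<integral>\<^sup>+s. ennreal (x ^ (snd zl + (fst zl - s)) * h (Suc n) ^ (2 * s)) \<partial>binomial_pmf (fst zl) (\<alpha>^n)) \<partial>tree_gen \<alpha> n)"
    by (simp add: case_prod_beta)
  also have "\<dots> = (\<integral>\<^sup>+zl. ennreal (x ^ snd zl * (\<alpha>^n * h (Suc n)^2 + (1 - \<alpha>^n) * x) ^ fst zl) \<partial>tree_gen \<alpha> n)"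
    using p x h1[of "Suc n"] by (intro nn_integral_cong binom_gf) auto
  also have "\<dots> \<le> (\<integral>\<^sup>+zl. ennreal (x ^ snd zl * h n ^ fst zl) \<partial>tree_gen \<alpha> n)"
  proof (intro nn_integral_mono ennreal_leI mult_left_mono power_mono hs)
    fix zl :: "nat \<times> nat"
    show "0 \<le> x ^ snd zl" using x by simp
    show "0 \<le> \<alpha>^n * h (Suc n)^2 + (1 - \<alpha>^n) * x" using p x by (intro add_nonneg_nonneg) auto
  qed
  also have "\<dots> \<le> ennreal (h 0)" by (rule Suc.IH)
  finally show ?case .
qed

lemma markov_bound:
  fixes \<alpha> x :: real and h :: "nat \<Rightarrow> real"
  assumes a: "0 < \<alpha>" "\<alpha> \<le> 1" and x: "1 \<le> x" and h1: "\<And>d. 1 \<le> h d"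
    and hs: "\<And>d. \<alpha>^d * h (Suc d)^2 + (1 - \<alpha>^d) * x \<le> h d"
  shows "measure_pmf.prob (tree_gen \<alpha> n) {(z, l). l > k} \<le> h 0 / x ^ (k+1)"
proof -
  let ?A = "{(z, l). l > k} :: (nat \<times> nat) set"
  have "ennreal (x ^ (k+1)) * emeasure (measure_pmf (tree_gen \<alpha> n)) ?A
      = (\<integral>\<^sup>+zl. ennreal (x ^ (k+1)) * indicator ?A zl \<partial>tree_gen \<alpha> n)"
    by (simp add: nn_integral_cmult_indicator)
  also have "\<dots> \<le> (\<integral>\<^sup>+zl. ennreal (x ^ snd zl * h n ^ fst zl) \<partial>tree_gen \<alpha> n)"
  proof (intro nn_integral_mono)
    fix zl :: "nat \<times> nat"
    obtain z l where zl: "zl = (z, l)" by (cases zl)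
    show "ennreal (x ^ (k+1)) * indicator ?A zl \<le> ennreal (x ^ snd zl * h n ^ fst zl)"
    proof (cases "l > k")
      case True
      have "x ^ (k+1) \<le> x ^ l" using True x by (intro power_increasing) auto
      also have "\<dots> \<le> x ^ l * h n ^ z" using x h1[of n] by (simp add: one_le_power)
      finally show ?thesis using True zl by (simp add: indicator_def ennreal_leI)
    qed (simp add: zl indicator_def)
  qed
  also have "\<dots> \<le> ennreal (h 0)" by (rule super[OF assms])
  finally have "ennreal (x ^ (k+1)) * ennreal (measure_pmf.prob (tree_gen \<alpha> n) ?A) \<le> ennreal (h 0)"
    by (simp add: measure_pmf.emeasure_eq_measure)
  hence "x ^ (k+1) * measure_pmf.prob (tree_gen \<alpha> n) ?A \<le> h 0"
    using x h1[of 0] by (simp add: ennreal_mult[symmetric] ennreal_le_iff)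
  moreover have "0 < x ^ (k+1)" using x by simp
  ultimately show ?thesis by (simp add: field_simps mult.commute)
qed

lemma tail_bound_D:
  fixes \<alpha> :: real and D k :: nat
  assumes a: "0 < \<alpha>" "\<alpha> < 1/2" and aD: "\<alpha>^D \<le> 1/16"
    and k1: "2 * 2^D \<le> k" and k2: "k < 2^(D+2)"
  shows "measure_pmf.prob (tree_gen \<alpha> n) {(z, l). l > k}
     \<le> exp (- real k * ln (real k) / 2 + real k * (- ln \<alpha> + ln 16))"
proof -
  define x where "x = 1 / (16 * \<alpha>^D)"
  define h where "h d = (8*x)^(2^(D-d)) / 2" for d
  have apos: "0 < \<alpha>^D" using a by simp
  have x1: "1 \<le> x" unfolding x_def using aD apos by (simp add: field_simps)
  have hge: "4 * x \<le> h d" for d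
  proof -
    have "8 * x \<le> (8*x)^(2^(D-d))" using x1 by (intro self_le_power) auto
    thus ?thesis unfolding h_def by simp
  qed
  have h1: "1 \<le> h d" for d using hge[of d] x1 by linarith
  have hs: "\<alpha>^d * h (Suc d)^2 + (1 - \<alpha>^d) * x \<le> h d" for d
  proof (cases "D \<le> d")
    case True
    have hd: "h d = 4 * x" "h (Suc d) = 4 * x" using True unfolding h_def by auto
    have "\<alpha>^d \<le> \<alpha>^D" using True a by (intro power_decreasing) auto
    hence "\<alpha>^d * x \<le> 1/16" unfolding x_def using apos by (simp add: field_simps)
    hence "\<alpha>^d * (16 * x^2) \<le> x" using x1 by (simp add: power2_eq_square)
    moreover have "0 \<le> \<alpha>^d" "\<alpha>^d \<le> 1" using a by (auto simp: power_le_one)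
    moreover have "(1-\<alpha>^d)*x \<le> x" using x1 \<open>0 \<le> \<alpha>^d\<close> by (simp add: algebra_simps)
    moreover have "(4*x)^2 = 16*x^2" by (simp add: power2_eq_square)
    ultimately have "\<alpha>^d * (4*x)^2 \<le> x" "(1-\<alpha>^d)*x \<le> x" by auto
    thus ?thesis unfolding hd using x1 by linarith
  next
    case False
    define y where "y = (8*x)^(2^(D - Suc d))"
    have dd: "D - d = Suc (D - Suc d)" using False by simp
    have "(8*x)^(2^(D-d)) = y^2" unfolding y_def dd by (simp only: power_Suc2 power_mult)
    hence hd: "h (Suc d) = y / 2" "h d = y^2 / 2" unfolding h_def y_def by auto
    have y8: "8 * x \<le> y" unfolding y_def using x1 by (intro self_le_power) auto
    have "0 \<le> \<alpha>^d" "\<alpha>^d \<le> 1" using a by (auto simp: power_le_one)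
    moreover have "x \<le> y^2/4"
    proof -
      have "8 * y \<le> y * y" using y8 x1 by (intro mult_right_mono) auto
      thus ?thesis using y8 x1 unfolding power2_eq_square by linarith
    qed
    moreover have "(1-\<alpha>^d)*x \<le> x" using x1 \<open>0 \<le> \<alpha>^d\<close> by (simp add: algebra_simps)
    moreover have "\<alpha>^d * (y/2)^2 \<le> (y/2)^2" using \<open>\<alpha>^d \<le> 1\<close> \<open>0 \<le> \<alpha>^d\<close> by (intro mult_left_le_one_le) auto
    moreover have "(y/2)^2 = y^2/4" by (simp add: power2_eq_square)
    ultimately show ?thesis unfolding hd by linarith
  qed
  have "measure_pmf.prob (tree_gen \<alpha> n) {(z, l). l > k} \<le> h 0 / x ^ (k+1)"
    using a x1 h1 hs by (intro markov_bound) auto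
  also have "\<dots> \<le> exp (- real k * ln (real k) / 2 + real k * (- ln \<alpha> + ln 16))"
  proof -
    define L where "L = - ln \<alpha>"
    define M where "M = real D * L"
    have "ln (2*\<alpha>) < 0" using a by (intro ln_less_zero) auto
    hence L2: "ln 2 < L" unfolding L_def using a by (simp add: ln_mult)
    have L0: "0 < L" using L2 ln_gt_zero[of "2::real"] by linarith
    have M0: "0 \<le> M" unfolding M_def using L0 by simp
    have lx: "ln x = M - ln 16" unfolding x_def M_def L_def using a
      by (simp add: ln_div ln_mult ln_realpow)
    have x0: "0 < x" using x1 by simp
    have l8x: "ln (8*x) \<le> M" using lx x0 by (simp add: ln_mult)
    have "h 0 / x^(k+1) \<le> (8*x)^(2^D) / x^k"
    proof -
      have "x^k \<le> x^(k+1)" using x1 by (intro power_increasing) auto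
      moreover have "0 < x^k" using x0 by simp
      moreover have "0 \<le> (8*x)^(2^D)" using x0 by simp
      ultimately have "(8*x)^(2^D) / x^(k+1) \<le> (8*x)^(2^D) / x^k" by (intro divide_left_mono) auto
      moreover have "h 0 \<le> (8*x)^(2^D)" unfolding h_def using x0 by simp
      moreover have "0 < x^(k+1)" using x0 by simp
      ultimately show ?thesis by (meson divide_right_mono less_imp_le order_trans)
    qed
    also have "(8*x)^(2^D) / x^k = exp (real (2^D) * ln (8*x) - real k * ln x)"
    proof -
      have "exp (real (2^D) * ln (8*x)) = (8*x)^(2^D)" unfolding exp_of_nat_mult using x0 by simp
      moreover have "exp (real k * ln x) = x^k" unfolding exp_of_nat_mult using x0 by simp
      ultimately show ?thesis by (simp add: exp_diff)
    qed
    also have "\<dots> \<le> exp (- real k * ln (real k) / 2 + real k * (- ln \<alpha> + ln 16))"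
    proof (subst exp_le_cancel_iff)
      have "real (2*2^D) \<le> real k" using k1 by (simp only: of_nat_le_iff)
      hence kD: "real (2^D) \<le> real k / 2" by simp
      have "real (2^D) * ln (8*x) \<le> real (2^D) * M" using l8x by (intro mult_left_mono) auto
      also have "\<dots> \<le> (real k / 2) * M" using kD M0 by (intro mult_right_mono) auto
      finally have A: "real (2^D) * ln (8*x) \<le> (real k / 2) * M" .
      have "0 < 2 * (2::nat)^D" by simp
      hence kpos: "0 < real k" using k1 by linarith
      have "ln (real k) < ln (2^(D+2))" using k2 kpos by (subst ln_less_cancel_iff) (auto simp del: power_Suc)
      also have "ln ((2::real)^(D+2)) = real (D+2) * ln 2" by (rule ln_realpow)
      also have "\<dots> \<le> real (D+2) * L" using L2 by (intro mult_left_mono) auto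
      finally have "ln (real k) - 2 * L \<le> M" unfolding M_def by (simp add: algebra_simps)
      hence B: "real k * (ln (real k) - 2 * L) \<le> real k * M" using kpos by (intro mult_left_mono) auto
      have "real (2^D) * ln (8*x) - real k * ln x \<le> (real k / 2) * M - real k * (M - ln 16)"
        using A lx by simp
      also have "\<dots> = - (real k * M) / 2 + real k * ln 16" by (simp add: algebra_simps)
      also have "\<dots> \<le> - (real k * (ln (real k) - 2 * L)) / 2 + real k * ln 16" using B by simp
      also have "\<dots> = - real k * ln (real k) / 2 + real k * (- ln \<alpha> + ln 16)" unfolding L_def by (simp add: field_simps)
      finally show "real (2^D) * ln (8*x) - real k * ln x \<le> - real k * ln (real k) / 2 + real k * (- ln \<alpha> + ln 16)" .
    qed
    finally show ?thesis .
  qed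
  finally show ?thesis .
qed

lemma leaf_tail_le:
  assumes "\<And>n. measure_pmf.prob (tree_gen \<alpha> n) {(z, l). l > k} \<le> B"
  shows "leaf_tail \<alpha> k \<le> B"
  unfolding leaf_tail_def using assms by (intro cSUP_least) auto

theorem corollary2:
  fixes \<alpha> :: real
  assumes "0 < \<alpha>" and "\<alpha> < 1/2"
  shows "\<exists>C > 0. \<exists>C_K > 0. \<forall>k::nat. k \<ge> 2 \<longrightarrow>
           leaf_tail \<alpha> k \<le> C * exp (- C_K * real k * ln (real k))"
proof -
  define c0 where "c0 = - ln \<alpha> + ln 16"
  define N :: nat where "N = nat \<lceil>exp (4 * c0)\<rceil> + 64"
  define C where "C = exp (real N * ln (real N) / 4)"
  have N64: "64 \<le> N" unfolding N_def by simp
  hence "0 \<le> real N * ln (real N)" by (intro mult_nonneg_nonneg) auto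
  hence C1: "1 \<le> C" unfolding C_def by simp
  have "\<forall>k::nat. k \<ge> 2 \<longrightarrow> leaf_tail \<alpha> k \<le> C * exp (- (1/4) * real k * ln (real k))"
  proof (intro allI impI)
    fix k :: nat assume k2: "2 \<le> k"
    show "leaf_tail \<alpha> k \<le> C * exp (- (1/4) * real k * ln (real k))"
    proof (cases "k < N")
      case True
      have "real k * ln (real k) \<le> real N * ln (real N)"
        using True k2 by (intro mult_mono) auto
      hence "1 \<le> C * exp (- (1/4) * real k * ln (real k))"
        unfolding C_def by (simp add: exp_add[symmetric])
      moreover have "leaf_tail \<alpha> k \<le> 1"
        by (intro leaf_tail_le measure_pmf.prob_le_1)
      ultimately show ?thesis by linarith
    next
      case False
      hence kN: "N \<le> k" by simp
      have k64: "64 \<le> k" using kN unfolding N_def by simp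
      have "exp (4 * c0) \<le> real k" using kN unfolding N_def by linarith
      hence "ln (exp (4 * c0)) \<le> ln (real k)" using k2 by (subst ln_le_cancel_iff) auto
      hence "c0 \<le> ln (real k) / 4" by simp
      hence "real k * c0 \<le> real k * (ln (real k) / 4)" by (intro mult_left_mono) auto
      hence lnk: "real k * c0 \<le> real k * ln (real k) / 4" by simp
      obtain E where E: "2^E \<le> k" "k < 2^(E+1)" using ex_power_ivl1[of 2 k] k2 by auto
      have E6: "6 \<le> E"
      proof (rule ccontr)
        assume "\<not> 6 \<le> E"
        hence "E + 1 \<le> 6" by simp
        hence "(2::nat)^(E+1) \<le> 2^6" by (intro power_increasing) auto
        thus False using E k64 by simp
      qed
      define D where "D = E - 1"
      have ED: "E = Suc D" using E6 unfolding D_def by simp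
      have D1: "2 * 2^D \<le> k" "k < 2^(D+2)" using E unfolding ED by auto
      have "\<alpha>^D \<le> (1/2)^D" using assms by (intro power_mono) auto
      also have "\<dots> \<le> (1/2)^4" using E6 unfolding ED by (intro power_decreasing) auto
      finally have aD: "\<alpha>^D \<le> 1/16" by (simp add: power_divide)
      have "leaf_tail \<alpha> k \<le> exp (- real k * ln (real k) / 2 + real k * c0)"
        unfolding c0_def by (intro leaf_tail_le tail_bound_D[of _ D] assms aD D1)
      also have "\<dots> \<le> exp (- (1/4) * real k * ln (real k))" using lnk by simp
      also have "\<dots> \<le> C * exp (- (1/4) * real k * ln (real k))" using C1 by simp
      finally show ?thesis .
    qed
  qed
  hence main: "\<forall>k::nat. k \<ge> 2 \<longrightarrow> leaf_tail \<alpha> k \<le> C * exp (- (1/4::real) * real k * ln (real k))" .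
  have q: "(0::real) < 1/4" by simp
  have C0: "0 < C" using C1 by simp
  show ?thesis using main q C0 by blast
qed
end
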